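(* Let $\mathcal{M}$ be a circular orientable embedding of type $(k,d)$ of a connected graph $X$. If $\mathcal{M}$ is orientably-regular, then: - the vertex-face incidence graph of $\mathcal{M}$ is edge-transitive; - the $H$-digraph of $\mathcal{M}$ is vertex-transitive.
   Context: Setting. A circular embedding is a cellular embedding in which every face is bounded by a cycle. It has type $(k,d)$ if every vertex has $d$ neighbours and every face uses $k$ vertices. $\mathcal{M}$ is orientably-regular if its group of orientation-preserving automorphisms acts regularly on the arcs (ordered pairs $(u,v)$ with $\{u,v\}$ an edge). Vertex-face incidence graph. This is the bipartite graph on the vertices and faces of $\mathcal{M}$, with a vertex adjacent to a face iff it lies on it. Vertex-face transition matrix. Fix a consistent orientation of the faces, so that each edge shared by two faces receives opposite directions in them. Let $M$ be the arc-face incidence matrix and $N$ the arc-tail incidence matrix. The transition matrix is $U=(\tfrac2kMM^T-I)(\tfrac2dNN^T-I)$. $H$-digraph. The principal Hamiltonian of a unitary $V=\sum_r\alpha_rF_r$ (spectral decomposition) is $H=-i\sum_r\log(\alpha_r)F_r$, with the branch chosen so that $-\pi<-i\log(\alpha_r)\le\pi$; it satisfies $V=\exp(iH)$. The $H$-digraph of $\mathcal{M}$ is the weighted digraph on the arcs of $X$ whose weighted adjacency matrix is the principal Hamiltonian $H$ of $U^2$; there is an arc $a\to b$ iff $H_{a,b}\neq0$. *)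

theory Defs
  imports "HOL-Analysis.Analysis"
begin

text \<open>An orientable cellular embedding of a
connected simple graph is encoded (Heffter--Edmonds) by a rotation system:
for every vertex v a cyclic permutation rho v of the neighbours of v.\<close>

definition simple_graph :: "'v set \<Rightarrow> ('v \<Rightarrow> 'v \<Rightarrow> bool) \<Rightarrow> bool" where
  "simple_graph V E \<longleftrightarrow> finite V \<and> (\<forall>u v. E u v \<longrightarrow> u \<in> V \<and> v \<in> V)
     \<and> (\<forall>u v. E u v \<longrightarrow> E v u) \<and> (\<forall>v. \<not> E v v)"

definition connected_graph :: "'v set \<Rightarrow> ('v \<Rightarrow> 'v \<Rightarrow> bool) \<Rightarrow> bool" where
  "connected_graph V E \<longleftrightarrow> V \<noteq> {} \<and> (\<forall>u\<in>V. \<forall>v\<in>V. E\<^sup>*\<^sup>* u v)"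

definition nbrs :: "('v \<Rightarrow> 'v \<Rightarrow> bool) \<Rightarrow> 'v \<Rightarrow> 'v set" where
  "nbrs E v = {u. E v u}"

definition arcs :: "'v set \<Rightarrow> ('v \<Rightarrow> 'v \<Rightarrow> bool) \<Rightarrow> ('v \<times> 'v) set" where
  "arcs V E = {(u, v). u \<in> V \<and> v \<in> V \<and> E u v}"

definition rotation_system :: "'v set \<Rightarrow> ('v \<Rightarrow> 'v \<Rightarrow> bool) \<Rightarrow> ('v \<Rightarrow> 'v \<Rightarrow> 'v) \<Rightarrow> bool" where
  "rotation_system V E \<rho> \<longleftrightarrow> (\<forall>v\<in>V. bij_betw (\<rho> v) (nbrs E v) (nbrs E v)
     \<and> (\<forall>u\<in>nbrs E v. \<forall>w\<in>nbrs E v. \<exists>n. (\<rho> v ^^ n) u = w))"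

text \<open>Face tracing: after traversing the arc (u,v), the next arc of the face is
(v, rho v u).  Faces are the orbits of this permutation on arcs; each face comes
with the orientation given by the traversal, so that an edge shared by two faces
gets opposite directions in them (consistent orientation).\<close>
definition face_perm :: "('v \<Rightarrow> 'v \<Rightarrow> 'v) \<Rightarrow> 'v \<times> 'v \<Rightarrow> 'v \<times> 'v" where
  "face_perm \<rho> a = (snd a, \<rho> (snd a) (fst a))"

definition face_orbit :: "('v \<Rightarrow> 'v \<Rightarrow> 'v) \<Rightarrow> 'v \<times> 'v \<Rightarrow> ('v \<times> 'v) set" where
  "face_orbit \<rho> a = range (\<lambda>n. (face_perm \<rho> ^^ n) a)"

definition faces :: "'v set \<Rightarrow> ('v \<Rightarrow> 'v \<Rightarrow> bool) \<Rightarrow> ('v \<Rightarrow> 'v \<Rightarrow> 'v) \<Rightarrow> ('v \<times> 'v) set set" where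
  "faces V E \<rho> = face_orbit \<rho> ` arcs V E"

definition face_vertices :: "('v \<times> 'v) set \<Rightarrow> 'v set" where
  "face_vertices F = fst ` F"

text \<open>Circular: every face is bounded by a cycle, i.e. the boundary walk has length
at least 3 and visits no vertex twice.\<close>
definition circular :: "'v set \<Rightarrow> ('v \<Rightarrow> 'v \<Rightarrow> bool) \<Rightarrow> ('v \<Rightarrow> 'v \<Rightarrow> 'v) \<Rightarrow> bool" where
  "circular V E \<rho> \<longleftrightarrow> (\<forall>F\<in>faces V E \<rho>. inj_on fst F \<and> card F \<ge> 3)"

definition has_type :: "'v set \<Rightarrow> ('v \<Rightarrow> 'v \<Rightarrow> bool) \<Rightarrow> ('v \<Rightarrow> 'v \<Rightarrow> 'v) \<Rightarrow> nat \<Rightarrow> nat \<Rightarrow> bool" where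
  "has_type V E \<rho> k d \<longleftrightarrow> (\<forall>v\<in>V. card (nbrs E v) = d)
     \<and> (\<forall>F\<in>faces V E \<rho>. card (face_vertices F) = k)"

definition or_aut :: "'v set \<Rightarrow> ('v \<Rightarrow> 'v \<Rightarrow> bool) \<Rightarrow> ('v \<Rightarrow> 'v \<Rightarrow> 'v) \<Rightarrow> ('v \<Rightarrow> 'v) \<Rightarrow> bool" where
  "or_aut V E \<rho> g \<longleftrightarrow> bij_betw g V V \<and> (\<forall>u\<in>V. \<forall>v\<in>V. E u v \<longleftrightarrow> E (g u) (g v))
     \<and> (\<forall>v\<in>V. \<forall>u. E v u \<longrightarrow> g (\<rho> v u) = \<rho> (g v) (g u))"

text \<open>Orientably-regular: the orientation-preserving automorphism group acts
regularly (transitively and freely) on the arcs.\<close>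
definition orientably_regular :: "'v set \<Rightarrow> ('v \<Rightarrow> 'v \<Rightarrow> bool) \<Rightarrow> ('v \<Rightarrow> 'v \<Rightarrow> 'v) \<Rightarrow> bool" where
  "orientably_regular V E \<rho> \<longleftrightarrow>
     (\<forall>a\<in>arcs V E. \<forall>b\<in>arcs V E. \<exists>g. or_aut V E \<rho> g \<and> (g (fst a), g (snd a)) = b)
   \<and> (\<forall>a\<in>arcs V E. \<forall>g. or_aut V E \<rho> g \<and> (g (fst a), g (snd a)) = a \<longrightarrow> (\<forall>x\<in>V. g x = x))"

definition graph_aut :: "'w set \<Rightarrow> ('w \<Rightarrow> 'w \<Rightarrow> bool) \<Rightarrow> ('w \<Rightarrow> 'w) \<Rightarrow> bool" where
  "graph_aut W R \<sigma> \<longleftrightarrow> bij_betw \<sigma> W W \<and> (\<forall>x\<in>W. \<forall>y\<in>W. R x y \<longleftrightarrow> R (\<sigma> x) (\<sigma> y))"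

definition edge_transitive :: "'w set \<Rightarrow> ('w \<Rightarrow> 'w \<Rightarrow> bool) \<Rightarrow> bool" where
  "edge_transitive W R \<longleftrightarrow> (\<forall>x\<in>W. \<forall>y\<in>W. \<forall>x'\<in>W. \<forall>y'\<in>W. R x y \<and> R x' y' \<longrightarrow>
      (\<exists>\<sigma>. graph_aut W R \<sigma> \<and> {\<sigma> x, \<sigma> y} = {x', y'}))"

definition vf_vertices :: "'v set \<Rightarrow> ('v \<Rightarrow> 'v \<Rightarrow> bool) \<Rightarrow> ('v \<Rightarrow> 'v \<Rightarrow> 'v) \<Rightarrow> ('v + ('v \<times> 'v) set) set" where
  "vf_vertices V E \<rho> = Inl ` V \<union> Inr ` faces V E \<rho>"

fun vf_adj :: "('v + ('v \<times> 'v) set) \<Rightarrow> ('v + ('v \<times> 'v) set) \<Rightarrow> bool" where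
  "vf_adj (Inl v) (Inr F) = (v \<in> face_vertices F)"
| "vf_adj (Inr F) (Inl v) = (v \<in> face_vertices F)"
| "vf_adj _ _ = False"

type_synonym 'a cmat = "'a \<Rightarrow> 'a \<Rightarrow> complex"

definition mmult :: "'a set \<Rightarrow> 'a cmat \<Rightarrow> 'a cmat \<Rightarrow> 'a cmat" where
  "mmult A X Y = (\<lambda>a b. \<Sum>c\<in>A. X a c * Y c b)"

definition mid :: "'a cmat" where
  "mid = (\<lambda>a b. if a = b then 1 else 0)"

definition mat_eq :: "'a set \<Rightarrow> 'a cmat \<Rightarrow> 'a cmat \<Rightarrow> bool" where
  "mat_eq A X Y \<longleftrightarrow> (\<forall>a\<in>A. \<forall>b\<in>A. X a b = Y a b)"

text \<open>Spectral decomposition V = sum over r of alpha_r F_r: the alpha_r are distinct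
(a finite set S), the F_r are nonzero orthogonal projections (Hermitian idempotents),
mutually orthogonal, summing to the identity.\<close>
definition spectral_decomp :: "'a set \<Rightarrow> 'a cmat \<Rightarrow> complex set \<Rightarrow> (complex \<Rightarrow> 'a cmat) \<Rightarrow> bool" where
  "spectral_decomp A V S F \<longleftrightarrow> finite S
     \<and> (\<forall>\<alpha>\<in>S. (\<forall>a\<in>A. \<forall>b\<in>A. F \<alpha> a b = cnj (F \<alpha> b a))
             \<and> mat_eq A (mmult A (F \<alpha>) (F \<alpha>)) (F \<alpha>)
             \<and> (\<exists>a\<in>A. \<exists>b\<in>A. F \<alpha> a b \<noteq> 0))
     \<and> (\<forall>\<alpha>\<in>S. \<forall>\<beta>\<in>S. \<alpha> \<noteq> \<beta> \<longrightarrow> mat_eq A (mmult A (F \<alpha>) (F \<beta>)) (\<lambda>_ _. 0))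
     \<and> mat_eq A (\<lambda>a b. \<Sum>\<alpha>\<in>S. F \<alpha> a b) mid
     \<and> mat_eq A V (\<lambda>a b. \<Sum>\<alpha>\<in>S. \<alpha> * F \<alpha> a b)"

text \<open>Principal Hamiltonian H = -i sum_r log(alpha_r) F_r, with the principal
branch: Isabelle's Ln has imaginary part in (-pi, pi], so -i Ln alpha has real part
in (-pi, pi] (and equals Arg alpha for |alpha| = 1).\<close>
definition principal_hamiltonian :: "'a set \<Rightarrow> 'a cmat \<Rightarrow> 'a cmat \<Rightarrow> bool" where
  "principal_hamiltonian A V H \<longleftrightarrow> (\<exists>S F. spectral_decomp A V S F
      \<and> mat_eq A H (\<lambda>a b. \<Sum>\<alpha>\<in>S. (- \<i> * Ln \<alpha>) * F \<alpha> a b))"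

text \<open>Vertex-transitivity of a weighted digraph on carrier A with weighted adjacency
matrix H (arc a to b iff H a b nonzero): automorphisms are permutations of A
preserving all weights.\<close>
definition weighted_digraph_aut :: "'a set \<Rightarrow> 'a cmat \<Rightarrow> ('a \<Rightarrow> 'a) \<Rightarrow> bool" where
  "weighted_digraph_aut A H \<sigma> \<longleftrightarrow> bij_betw \<sigma> A A \<and> (\<forall>a\<in>A. \<forall>b\<in>A. H (\<sigma> a) (\<sigma> b) = H a b)"

definition weighted_vertex_transitive :: "'a set \<Rightarrow> 'a cmat \<Rightarrow> bool" where
  "weighted_vertex_transitive A H \<longleftrightarrow>
     (\<forall>a\<in>A. \<forall>b\<in>A. \<exists>\<sigma>. weighted_digraph_aut A H \<sigma> \<and> \<sigma> a = b)"

definition arc_face_inc :: "('v \<times> 'v) \<Rightarrow> ('v \<times> 'v) set \<Rightarrow> real" where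
  "arc_face_inc a F = (if a \<in> F then 1 else 0)"

definition arc_tail_inc :: "('v \<times> 'v) \<Rightarrow> 'v \<Rightarrow> real" where
  "arc_tail_inc a v = (if fst a = v then 1 else 0)"

definition transition_matrix ::
  "'v set \<Rightarrow> ('v \<Rightarrow> 'v \<Rightarrow> bool) \<Rightarrow> ('v \<Rightarrow> 'v \<Rightarrow> 'v) \<Rightarrow> nat \<Rightarrow> nat \<Rightarrow> ('v \<times> 'v) cmat" where
  "transition_matrix V E \<rho> k d =
     mmult (arcs V E)
       (\<lambda>a b. complex_of_real (2 / real k * (\<Sum>F\<in>faces V E \<rho>. arc_face_inc a F * arc_face_inc b F))
              - mid a b)
       (\<lambda>a b. complex_of_real (2 / real d * (\<Sum>v\<in>V. arc_tail_inc a v * arc_tail_inc b v))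
              - mid a b)"

end

theory Submission
  imports Defs
begin


lemma mmult_assoc:
  assumes "finite A"
  shows "mmult A (mmult A X Y) Z a b = mmult A X (mmult A Y Z) a b"
  unfolding mmult_def
  by (simp add: sum_distrib_left sum_distrib_right mult.assoc) (rule sum.swap)

lemma mmult_cong:
  assumes "mat_eq A X X'" "mat_eq A Y Y'" "a \<in> A" "b \<in> A"
  shows "mmult A X Y a b = mmult A X' Y' a b"
  using assms unfolding mmult_def mat_eq_def by (auto intro!: sum.cong)

lemma mmult_mid_right:
  assumes "finite A" "a \<in> A" "b \<in> A"
  shows "mmult A X mid a b = X a b"
  using assms unfolding mmult_def mid_def by (simp add: if_distrib cong: if_cong)

lemma mmult_mid_left:
  assumes "finite A" "a \<in> A" "b \<in> A"
  shows "mmult A mid X a b = X a b"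
  using assms unfolding mmult_def mid_def by (simp add: if_distrib[of "\<lambda>x. x * _"] cong: if_cong)

definition mconj :: "('a \<Rightarrow> 'a) \<Rightarrow> 'a cmat \<Rightarrow> 'a cmat" where
  "mconj \<sigma> X = (\<lambda>a b. X (\<sigma> a) (\<sigma> b))"

lemma mmult_mconj:
  assumes "bij_betw \<sigma> A A"
  shows "mmult A (mconj \<sigma> X) (mconj \<sigma> Y) a b = mmult A X Y (\<sigma> a) (\<sigma> b)"
  unfolding mmult_def mconj_def
  using sum.reindex_bij_betw[OF assms, of "\<lambda>c. X (\<sigma> a) c * Y c (\<sigma> b)"] by simp

lemma spectral_mconj:
  assumes sd: "spectral_decomp A V S F" and bij: "bij_betw \<sigma> A A"
    and inv: "\<forall>a\<in>A. \<forall>b\<in>A. V (\<sigma> a) (\<sigma> b) = V a b"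
  shows "spectral_decomp A V S (\<lambda>\<alpha>. mconj \<sigma> (F \<alpha>))"
proof -
  have mem: "\<sigma> a \<in> A" if "a \<in> A" for a using bij that by (rule bij_betw_apply)
  have inj: "\<sigma> a = \<sigma> b \<longleftrightarrow> a = b" if "a \<in> A" "b \<in> A" for a b
    using bij that unfolding bij_betw_def inj_on_def by blast
  have ex: "\<exists>a'\<in>A. \<sigma> a' = a" if "a \<in> A" for a
    using bij that unfolding bij_betw_def by (metis imageE)
  have c1: "finite S" using sd unfolding spectral_decomp_def by blast
  have c2: "(\<forall>a\<in>A. \<forall>b\<in>A. mconj \<sigma> (F \<alpha>) a b = cnj (mconj \<sigma> (F \<alpha>) b a))
             \<and> mat_eq A (mmult A (mconj \<sigma> (F \<alpha>)) (mconj \<sigma> (F \<alpha>))) (mconj \<sigma> (F \<alpha>))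
             \<and> (\<exists>a\<in>A. \<exists>b\<in>A. mconj \<sigma> (F \<alpha>) a b \<noteq> 0)" if "\<alpha> \<in> S" for \<alpha>
  proof (intro conjI)
    have h1: "\<forall>a\<in>A. \<forall>b\<in>A. F \<alpha> a b = cnj (F \<alpha> b a)" using sd that unfolding spectral_decomp_def by blast
    have h2: "mat_eq A (mmult A (F \<alpha>) (F \<alpha>)) (F \<alpha>)" using sd that unfolding spectral_decomp_def by blast
    have h3: "\<exists>a\<in>A. \<exists>b\<in>A. F \<alpha> a b \<noteq> 0" using sd that unfolding spectral_decomp_def by blast
    show "\<forall>a\<in>A. \<forall>b\<in>A. mconj \<sigma> (F \<alpha>) a b = cnj (mconj \<sigma> (F \<alpha>) b a)"
    proof (intro ballI)
      fix a b assume "a \<in> A" "b \<in> A"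
      then show "mconj \<sigma> (F \<alpha>) a b = cnj (mconj \<sigma> (F \<alpha>) b a)"
        unfolding mconj_def using h1 mem by blast
    qed
    show "mat_eq A (mmult A (mconj \<sigma> (F \<alpha>)) (mconj \<sigma> (F \<alpha>))) (mconj \<sigma> (F \<alpha>))"
      unfolding mat_eq_def
    proof (intro ballI)
      fix a b assume "a \<in> A" "b \<in> A"
      then show "mmult A (mconj \<sigma> (F \<alpha>)) (mconj \<sigma> (F \<alpha>)) a b = mconj \<sigma> (F \<alpha>) a b"
        using h2 mem unfolding mmult_mconj[OF bij] mat_eq_def by (simp add: mconj_def)
    qed
    from h3 obtain a b where ab: "a \<in> A" "b \<in> A" "F \<alpha> a b \<noteq> 0" by blast
    from ex[OF ab(1)] ex[OF ab(2)] obtain a' b' where "a' \<in> A" "b' \<in> A" "\<sigma> a' = a" "\<sigma> b' = b" by blast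
    then show "\<exists>a\<in>A. \<exists>b\<in>A. mconj \<sigma> (F \<alpha>) a b \<noteq> 0" using ab unfolding mconj_def by blast
  qed
  have c3: "mat_eq A (mmult A (mconj \<sigma> (F \<alpha>)) (mconj \<sigma> (F \<beta>))) (\<lambda>_ _. 0)"
    if "\<alpha> \<in> S" "\<beta> \<in> S" "\<alpha> \<noteq> \<beta>" for \<alpha> \<beta>
  proof -
    have "mat_eq A (mmult A (F \<alpha>) (F \<beta>)) (\<lambda>_ _. 0)" using sd that unfolding spectral_decomp_def by blast
    then show ?thesis unfolding mat_eq_def mmult_mconj[OF bij] using mem by blast
  qed
  have c4: "mat_eq A (\<lambda>a b. \<Sum>\<alpha>\<in>S. mconj \<sigma> (F \<alpha>) a b) mid"
    unfolding mat_eq_def mconj_def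
  proof (intro ballI)
    fix a b assume ab: "a \<in> A" "b \<in> A"
    have "mat_eq A (\<lambda>a b. \<Sum>\<alpha>\<in>S. F \<alpha> a b) mid" using sd unfolding spectral_decomp_def by blast
    then have "(\<Sum>\<alpha>\<in>S. F \<alpha> (\<sigma> a) (\<sigma> b)) = mid (\<sigma> a) (\<sigma> b)" using mem ab unfolding mat_eq_def by simp
    also have "\<dots> = mid a b" unfolding mid_def using inj[OF ab] by simp
    finally show "(\<Sum>\<alpha>\<in>S. F \<alpha> (\<sigma> a) (\<sigma> b)) = mid a b" .
  qed
  have c5: "mat_eq A V (\<lambda>a b. \<Sum>\<alpha>\<in>S. \<alpha> * mconj \<sigma> (F \<alpha>) a b)"
    unfolding mat_eq_def mconj_def
  proof (intro ballI)
    fix a b assume ab: "a \<in> A" "b \<in> A"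
    have "mat_eq A V (\<lambda>a b. \<Sum>\<alpha>\<in>S. \<alpha> * F \<alpha> a b)" using sd unfolding spectral_decomp_def by blast
    then have h: "\<forall>a\<in>A. \<forall>b\<in>A. V a b = (\<Sum>\<alpha>\<in>S. \<alpha> * F \<alpha> a b)" unfolding mat_eq_def by simp
    have "V a b = V (\<sigma> a) (\<sigma> b)" using inv ab by simp
    also have "\<dots> = (\<Sum>\<alpha>\<in>S. \<alpha> * F \<alpha> (\<sigma> a) (\<sigma> b))" using h mem ab by simp
    finally show "V a b = (\<Sum>\<alpha>\<in>S. \<alpha> * F \<alpha> (\<sigma> a) (\<sigma> b))" .
  qed
  show ?thesis unfolding spectral_decomp_def using c1 c2 c3 c4 c5 by blast
qed

lemma sd_facts:
  assumes "spectral_decomp A V S F"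
  shows sd_fin: "finite S"
    and sd_idem: "\<And>\<alpha> a b. \<alpha> \<in> S \<Longrightarrow> a \<in> A \<Longrightarrow> b \<in> A \<Longrightarrow> mmult A (F \<alpha>) (F \<alpha>) a b = F \<alpha> a b"
    and sd_orth: "\<And>\<alpha> \<beta> a b. \<alpha> \<in> S \<Longrightarrow> \<beta> \<in> S \<Longrightarrow> \<alpha> \<noteq> \<beta> \<Longrightarrow> a \<in> A \<Longrightarrow> b \<in> A \<Longrightarrow> mmult A (F \<alpha>) (F \<beta>) a b = 0"
    and sd_id: "\<And>a b. a \<in> A \<Longrightarrow> b \<in> A \<Longrightarrow> (\<Sum>\<alpha>\<in>S. F \<alpha> a b) = mid a b"
    and sd_V: "\<And>a b. a \<in> A \<Longrightarrow> b \<in> A \<Longrightarrow> V a b = (\<Sum>\<alpha>\<in>S. \<alpha> * F \<alpha> a b)"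
proof -
  have d: "finite S" "\<forall>\<alpha>\<in>S. mat_eq A (mmult A (F \<alpha>) (F \<alpha>)) (F \<alpha>)"
    "\<forall>\<alpha>\<in>S. \<forall>\<beta>\<in>S. \<alpha> \<noteq> \<beta> \<longrightarrow> mat_eq A (mmult A (F \<alpha>) (F \<beta>)) (\<lambda>_ _. 0)"
    "mat_eq A (\<lambda>a b. \<Sum>\<alpha>\<in>S. F \<alpha> a b) mid" "mat_eq A V (\<lambda>a b. \<Sum>\<alpha>\<in>S. \<alpha> * F \<alpha> a b)"
    using assms unfolding spectral_decomp_def by (elim conjE; simp only: Ball_def; blast)+
  show "finite S" by (fact d(1))
  show "\<And>\<alpha> a b. \<alpha> \<in> S \<Longrightarrow> a \<in> A \<Longrightarrow> b \<in> A \<Longrightarrow> mmult A (F \<alpha>) (F \<alpha>) a b = F \<alpha> a b"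
    using d(2) unfolding mat_eq_def by simp
  show "\<And>\<alpha> \<beta> a b. \<alpha> \<in> S \<Longrightarrow> \<beta> \<in> S \<Longrightarrow> \<alpha> \<noteq> \<beta> \<Longrightarrow> a \<in> A \<Longrightarrow> b \<in> A \<Longrightarrow> mmult A (F \<alpha>) (F \<beta>) a b = 0"
    using d(3) unfolding mat_eq_def by simp
  show "\<And>a b. a \<in> A \<Longrightarrow> b \<in> A \<Longrightarrow> (\<Sum>\<alpha>\<in>S. F \<alpha> a b) = mid a b"
    using d(4) unfolding mat_eq_def by simp
  show "\<And>a b. a \<in> A \<Longrightarrow> b \<in> A \<Longrightarrow> V a b = (\<Sum>\<alpha>\<in>S. \<alpha> * F \<alpha> a b)"
    using d(5) unfolding mat_eq_def by simp
qed
lemma spectral_eigen: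
  assumes sd: "spectral_decomp A V S F" and fin: "finite A" and b: "\<beta> \<in> S" and ab: "a \<in> A" "b \<in> A"
  shows "mmult A V (F \<beta>) a b = \<beta> * F \<beta> a b" "mmult A (F \<beta>) V a b = \<beta> * F \<beta> a b"
proof -
  have S: "finite S" by (rule sd_fin[OF sd])
  have V: "mat_eq A V (\<lambda>a b. \<Sum>\<alpha>\<in>S. \<alpha> * F \<alpha> a b)" unfolding mat_eq_def using sd_V[OF sd] by blast
  have "mmult A V (F \<beta>) a b = mmult A (\<lambda>a b. \<Sum>\<alpha>\<in>S. \<alpha> * F \<alpha> a b) (F \<beta>) a b"
    using mmult_cong[OF V _ ab] by (simp add: mat_eq_def)
  also have "\<dots> = (\<Sum>\<alpha>\<in>S. \<alpha> * mmult A (F \<alpha>) (F \<beta>) a b)"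
    unfolding mmult_def by (simp add: sum_distrib_right sum_distrib_left mult.assoc) (rule sum.swap)
  also have "\<dots> = (\<Sum>\<alpha>\<in>S. if \<alpha> = \<beta> then \<beta> * F \<beta> a b else 0)"
    by (rule sum.cong) (use sd_orth[OF sd _ b _ ab] sd_idem[OF sd b ab] in auto)
  also have "\<dots> = \<beta> * F \<beta> a b" using S b by simp
  finally show "mmult A V (F \<beta>) a b = \<beta> * F \<beta> a b" .
  have "mmult A (F \<beta>) V a b = mmult A (F \<beta>) (\<lambda>a b. \<Sum>\<alpha>\<in>S. \<alpha> * F \<alpha> a b) a b"
    using mmult_cong[OF _ V ab] by (simp add: mat_eq_def)
  also have "\<dots> = (\<Sum>\<alpha>\<in>S. \<alpha> * mmult A (F \<beta>) (F \<alpha>) a b)"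
    unfolding mmult_def by (simp add: sum_distrib_right sum_distrib_left mult.left_commute) (rule sum.swap)
  also have "\<dots> = (\<Sum>\<alpha>\<in>S. if \<alpha> = \<beta> then \<beta> * F \<beta> a b else 0)"
    by (rule sum.cong) (use sd_orth[OF sd b _ _ ab] sd_idem[OF sd b ab] in auto)
  also have "\<dots> = \<beta> * F \<beta> a b" using S b by simp
  finally show "mmult A (F \<beta>) V a b = \<beta> * F \<beta> a b" .
qed

lemma spectral_cross:
  assumes sF: "spectral_decomp A V S F" and sG: "spectral_decomp A V S G" and fin: "finite A"
    and "\<alpha> \<in> S" "\<beta> \<in> S" "\<alpha> \<noteq> \<beta>" "a \<in> A" "b \<in> A"
  shows "mmult A (F \<alpha>) (G \<beta>) a b = 0"
proof -
  have "\<alpha> * mmult A (F \<alpha>) (G \<beta>) a b = mmult A (\<lambda>x y. \<alpha> * F \<alpha> x y) (G \<beta>) a b"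
    unfolding mmult_def by (simp add: sum_distrib_left mult.assoc)
  also have "\<dots> = mmult A (mmult A (F \<alpha>) V) (G \<beta>) a b"
    by (rule mmult_cong) (use spectral_eigen(2)[OF sF fin \<open>\<alpha>\<in>S\<close>] assms in \<open>auto simp: mat_eq_def\<close>)
  also have "\<dots> = mmult A (F \<alpha>) (mmult A V (G \<beta>)) a b" by (rule mmult_assoc[OF fin])
  also have "\<dots> = mmult A (F \<alpha>) (\<lambda>x y. \<beta> * G \<beta> x y) a b"
    by (rule mmult_cong) (use spectral_eigen(1)[OF sG fin \<open>\<beta>\<in>S\<close>] assms in \<open>auto simp: mat_eq_def\<close>)
  also have "\<dots> = \<beta> * mmult A (F \<alpha>) (G \<beta>) a b"
    unfolding mmult_def by (simp add: sum_distrib_left mult.left_commute)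
  finally show ?thesis using assms(6) by (metis mult_cancel_right)
qed

lemma spectral_unique:
  assumes sF: "spectral_decomp A V S F" and sG: "spectral_decomp A V S G" and fin: "finite A"
    and al: "\<alpha> \<in> S" and ab: "a \<in> A" "b \<in> A"
  shows "F \<alpha> a b = G \<alpha> a b"
proof -
  have S: "finite S" by (rule sd_fin[OF sF])
  have IG: "mat_eq A (\<lambda>a b. \<Sum>\<beta>\<in>S. G \<beta> a b) mid" and IF: "mat_eq A (\<lambda>a b. \<Sum>\<beta>\<in>S. F \<beta> a b) mid"
    unfolding mat_eq_def using sd_id[OF sF] sd_id[OF sG] by blast+
  have "F \<alpha> a b = mmult A (F \<alpha>) mid a b" using mmult_mid_right[OF fin ab] by simp
  also have "\<dots> = mmult A (F \<alpha>) (\<lambda>a b. \<Sum>\<beta>\<in>S. G \<beta> a b) a b"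
    using mmult_cong[OF _ IG ab, of "F \<alpha>" "F \<alpha>"] by (simp add: mat_eq_def)
  also have "\<dots> = (\<Sum>\<beta>\<in>S. mmult A (F \<alpha>) (G \<beta>) a b)"
    unfolding mmult_def by (simp add: sum_distrib_left) (rule sum.swap)
  also have "\<dots> = (\<Sum>\<beta>\<in>S. if \<beta> = \<alpha> then mmult A (F \<alpha>) (G \<alpha>) a b else 0)"
    by (rule sum.cong) (use spectral_cross[OF sF sG fin al _ _ ab] in auto)
  also have "\<dots> = mmult A (F \<alpha>) (G \<alpha>) a b" using S al by simp
  finally have 1: "F \<alpha> a b = mmult A (F \<alpha>) (G \<alpha>) a b" .
  have "G \<alpha> a b = mmult A mid (G \<alpha>) a b" using mmult_mid_left[OF fin ab] by simp
  also have "\<dots> = mmult A (\<lambda>a b. \<Sum>\<beta>\<in>S. F \<beta> a b) (G \<alpha>) a b"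
    using mmult_cong[OF IF _ ab, of "G \<alpha>" "G \<alpha>"] by (simp add: mat_eq_def)
  also have "\<dots> = (\<Sum>\<beta>\<in>S. mmult A (F \<beta>) (G \<alpha>) a b)"
    unfolding mmult_def by (simp add: sum_distrib_right) (rule sum.swap)
  also have "\<dots> = (\<Sum>\<beta>\<in>S. if \<beta> = \<alpha> then mmult A (F \<alpha>) (G \<alpha>) a b else 0)"
    by (rule sum.cong) (use spectral_cross[OF sF sG fin _ al _ ab] in auto)
  also have "\<dots> = mmult A (F \<alpha>) (G \<alpha>) a b" using S al by simp
  finally show ?thesis using 1 by simp
qed

lemma hamiltonian_invariant:
  assumes H: "principal_hamiltonian A V H" and fin: "finite A" and bij: "bij_betw \<sigma> A A"
    and inv: "\<forall>a\<in>A. \<forall>b\<in>A. V (\<sigma> a) (\<sigma> b) = V a b"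
  shows "weighted_digraph_aut A H \<sigma>"
proof -
  obtain S F where sd: "spectral_decomp A V S F"
    and Hd: "mat_eq A H (\<lambda>a b. \<Sum>\<alpha>\<in>S. (- \<i> * Ln \<alpha>) * F \<alpha> a b)"
    using H unfolding principal_hamiltonian_def by blast
  note sd2 = spectral_mconj[OF sd bij inv]
  have mem: "\<sigma> a \<in> A" if "a \<in> A" for a using bij that by (rule bij_betw_apply)
  show ?thesis unfolding weighted_digraph_aut_def
  proof (intro conjI bij ballI)
    fix a b assume ab: "a \<in> A" "b \<in> A"
    have "H (\<sigma> a) (\<sigma> b) = (\<Sum>\<alpha>\<in>S. (- \<i> * Ln \<alpha>) * F \<alpha> (\<sigma> a) (\<sigma> b))"
      using Hd mem[OF ab(1)] mem[OF ab(2)] unfolding mat_eq_def by simp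
    also have "\<dots> = (\<Sum>\<alpha>\<in>S. (- \<i> * Ln \<alpha>) * F \<alpha> a b)"
      apply (rule sum.cong, simp)
      using spectral_unique[OF sd2 sd fin _ ab] by (simp add: mconj_def)
    also have "\<dots> = H a b" using Hd ab unfolding mat_eq_def by simp
    finally show "H (\<sigma> a) (\<sigma> b) = H a b" .
  qed
qed



definition gg :: "('v \<Rightarrow> 'v) \<Rightarrow> 'v \<times> 'v \<Rightarrow> 'v \<times> 'v" where
  "gg g a = (g (fst a), g (snd a))"

locale RS =
  fixes V :: "'v set" and E :: "'v \<Rightarrow> 'v \<Rightarrow> bool" and \<rho> :: "'v \<Rightarrow> 'v \<Rightarrow> 'v"
  assumes sg: "simple_graph V E" and rs: "rotation_system V E \<rho>"
begin

lemma finV: "finite V" using sg unfolding simple_graph_def by blast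
lemma EV: "E u v \<Longrightarrow> u \<in> V \<and> v \<in> V" using sg unfolding simple_graph_def by blast
lemma Esym: "E u v \<Longrightarrow> E v u" using sg unfolding simple_graph_def by blast

lemma arcs_iff: "a \<in> arcs V E \<longleftrightarrow> E (fst a) (snd a)"
  using EV by (cases a) (auto simp: arcs_def)

lemma fin_arcs: "finite (arcs V E)"
proof -
  have "arcs V E \<subseteq> V \<times> V" by (auto simp: arcs_def)
  then show ?thesis using finV finite_subset by blast
qed

lemma rho_nbr: "u \<in> nbrs E v \<Longrightarrow> v \<in> V \<Longrightarrow> \<rho> v u \<in> nbrs E v"
  using rs unfolding rotation_system_def bij_betw_def by blast

lemma rho_inj: "v \<in> V \<Longrightarrow> inj_on (\<rho> v) (nbrs E v)"
  using rs unfolding rotation_system_def bij_betw_def by blast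

lemma fp_arcs: "a \<in> arcs V E \<Longrightarrow> face_perm \<rho> a \<in> arcs V E"
proof -
  assume a: "a \<in> arcs V E"
  then have e: "E (snd a) (fst a)" "snd a \<in> V" using arcs_iff Esym EV by blast+
  then have "\<rho> (snd a) (fst a) \<in> nbrs E (snd a)" using rho_nbr by (simp add: nbrs_def)
  then show ?thesis by (simp add: arcs_iff face_perm_def nbrs_def)
qed

lemma fpn_arcs: "a \<in> arcs V E \<Longrightarrow> (face_perm \<rho> ^^ n) a \<in> arcs V E"
  by (induction n) (auto intro: fp_arcs)

lemma fp_inj: "inj_on (face_perm \<rho>) (arcs V E)"
proof (rule inj_onI)
  fix a b assume a: "a \<in> arcs V E" and b: "b \<in> arcs V E" and eq: "face_perm \<rho> a = face_perm \<rho> b"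
  then have s: "snd a = snd b" and r: "\<rho> (snd a) (fst a) = \<rho> (snd a) (fst b)"
    by (auto simp: face_perm_def)
  have "fst a \<in> nbrs E (snd a)" "fst b \<in> nbrs E (snd a)" "snd a \<in> V"
    using a b s arcs_iff Esym EV by (auto simp: nbrs_def)
  then have "fst a = fst b" using rho_inj r inj_on_def by metis
  then show "a = b" using s by (simp add: prod_eq_iff)
qed

lemma orbit_sub: "a \<in> arcs V E \<Longrightarrow> face_orbit \<rho> a \<subseteq> arcs V E"
  unfolding face_orbit_def using fpn_arcs by blast

lemma fp_image: assumes a: "a \<in> arcs V E"
  shows "face_perm \<rho> ` face_orbit \<rho> a = face_orbit \<rho> a"
proof (rule endo_inj_surj)
  show "finite (face_orbit \<rho> a)" using orbit_sub[OF a] fin_arcs finite_subset by blast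
  show "face_perm \<rho> ` face_orbit \<rho> a \<subseteq> face_orbit \<rho> a"
  proof
    fix x assume "x \<in> face_perm \<rho> ` face_orbit \<rho> a"
    then obtain n where "x = face_perm \<rho> ((face_perm \<rho> ^^ n) a)" unfolding face_orbit_def by auto
    then have "x = (face_perm \<rho> ^^ Suc n) a" by simp
    then show "x \<in> face_orbit \<rho> a" unfolding face_orbit_def by blast
  qed
  show "inj_on (face_perm \<rho>) (face_orbit \<rho> a)" using fp_inj orbit_sub[OF a] inj_on_subset by blast
qed

lemma fpn_image: assumes a: "a \<in> arcs V E"
  shows "(face_perm \<rho> ^^ n) ` face_orbit \<rho> a = face_orbit \<rho> a"
proof (induction n)
  case 0 then show ?case by simp
next
  case (Suc n)
  have "(face_perm \<rho> ^^ Suc n) ` face_orbit \<rho> a = (face_perm \<rho> ^^ n) ` (face_perm \<rho> ` face_orbit \<rho> a)"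
    by (simp only: funpow_Suc_right image_comp)
  also have "\<dots> = face_orbit \<rho> a" using fp_image[OF a] Suc by simp
  finally show ?case .
qed

lemma orbit_shift: "face_orbit \<rho> ((face_perm \<rho> ^^ n) a) = (face_perm \<rho> ^^ n) ` face_orbit \<rho> a"
proof -
  have "(face_perm \<rho> ^^ m) ((face_perm \<rho> ^^ n) a) = (face_perm \<rho> ^^ n) ((face_perm \<rho> ^^ m) a)" for m
  proof -
    have "(face_perm \<rho> ^^ m) ((face_perm \<rho> ^^ n) a) = (face_perm \<rho> ^^ (m + n)) a" by (simp add: funpow_add)
    also have "\<dots> = (face_perm \<rho> ^^ (n + m)) a" by (simp add: add.commute)
    also have "\<dots> = (face_perm \<rho> ^^ n) ((face_perm \<rho> ^^ m) a)" by (simp add: funpow_add)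
    finally show ?thesis .
  qed
  then show ?thesis unfolding face_orbit_def by (auto simp: image_image)
qed

lemma orbit_same: assumes a: "a \<in> arcs V E" and b: "b \<in> face_orbit \<rho> a"
  shows "face_orbit \<rho> b = face_orbit \<rho> a"
proof -
  from b obtain n where "b = (face_perm \<rho> ^^ n) a" unfolding face_orbit_def by auto
  then show ?thesis using orbit_shift fpn_image[OF a] by simp
qed

lemma faces_sub: "F \<in> faces V E \<rho> \<Longrightarrow> F \<subseteq> arcs V E"
  unfolding faces_def using orbit_sub by blast

lemma fin_faces: "finite (faces V E \<rho>)"
  unfolding faces_def using fin_arcs by simp

lemma face_rep: assumes F: "F \<in> faces V E \<rho>" and a: "a \<in> F"
  shows "a \<in> arcs V E" "F = face_orbit \<rho> a"
proof -
  from F obtain a0 where a0: "a0 \<in> arcs V E" "F = face_orbit \<rho> a0" unfolding faces_def by blast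
  show "a \<in> arcs V E" using a a0 orbit_sub by blast
  show "F = face_orbit \<rho> a" using orbit_same[OF a0(1)] a a0(2) by simp
qed

context
  fixes g assumes aut: "or_aut V E \<rho> g"
begin

lemma g_bij: "bij_betw g V V" using aut unfolding or_aut_def by blast
lemma g_mem: "v \<in> V \<Longrightarrow> g v \<in> V" using g_bij by (rule bij_betw_apply)
lemma g_inj: "u \<in> V \<Longrightarrow> v \<in> V \<Longrightarrow> g u = g v \<longleftrightarrow> u = v"
  using g_bij unfolding bij_betw_def inj_on_def by blast
lemma g_E: "u \<in> V \<Longrightarrow> v \<in> V \<Longrightarrow> E u v \<longleftrightarrow> E (g u) (g v)" using aut unfolding or_aut_def by blast
lemma g_rho: "v \<in> V \<Longrightarrow> E v u \<Longrightarrow> g (\<rho> v u) = \<rho> (g v) (g u)" using aut unfolding or_aut_def by blast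

lemma gg_arcs: "a \<in> arcs V E \<Longrightarrow> gg g a \<in> arcs V E"
proof -
  assume a: "a \<in> arcs V E"
  then have "E (fst a) (snd a)" "fst a \<in> V" "snd a \<in> V" using arcs_iff EV by blast+
  then have "E (g (fst a)) (g (snd a))" using g_E by blast
  then show ?thesis unfolding arcs_iff gg_def by simp
qed

lemma gg_inj: "inj_on (gg g) (arcs V E)"
proof (rule inj_onI)
  fix a b assume a: "a \<in> arcs V E" and b: "b \<in> arcs V E" and e: "gg g a = gg g b"
  have "fst a \<in> V" "snd a \<in> V" "fst b \<in> V" "snd b \<in> V" using a b arcs_iff EV by blast+
  moreover have "g (fst a) = g (fst b)" "g (snd a) = g (snd b)" using e by (simp_all add: gg_def)
  ultimately show "a = b" using g_inj by (simp add: prod_eq_iff)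
qed

lemma gg_bij: "bij_betw (gg g) (arcs V E) (arcs V E)"
proof -
  have "gg g ` arcs V E = arcs V E"
    by (rule endo_inj_surj[OF fin_arcs]) (use gg_arcs gg_inj in auto)
  then show ?thesis using gg_inj unfolding bij_betw_def by blast
qed

lemma gg_fp: "a \<in> arcs V E \<Longrightarrow> face_perm \<rho> (gg g a) = gg g (face_perm \<rho> a)"
proof -
  assume a: "a \<in> arcs V E"
  then have "snd a \<in> V" "E (snd a) (fst a)" using arcs_iff EV Esym by blast+
  then show ?thesis by (simp add: face_perm_def gg_def g_rho)
qed

lemma gg_fpn: "a \<in> arcs V E \<Longrightarrow> (face_perm \<rho> ^^ n) (gg g a) = gg g ((face_perm \<rho> ^^ n) a)"
  by (induction n) (auto simp: gg_fp fpn_arcs)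

lemma gg_orbit: "a \<in> arcs V E \<Longrightarrow> gg g ` face_orbit \<rho> a = face_orbit \<rho> (gg g a)"
  unfolding face_orbit_def by (auto simp: gg_fpn image_image)

lemma gg_faces_bij: "bij_betw ((`) (gg g)) (faces V E \<rho>) (faces V E \<rho>)"
proof -
  have inj: "inj_on ((`) (gg g)) (faces V E \<rho>)"
  proof (rule inj_onI)
    fix F G assume "F \<in> faces V E \<rho>" "G \<in> faces V E \<rho>" "gg g ` F = gg g ` G"
    then show "F = G" using inj_on_image_eq_iff[OF gg_inj] faces_sub by metis
  qed
  have sub: "(`) (gg g) ` faces V E \<rho> \<subseteq> faces V E \<rho>"
  proof
    fix X assume "X \<in> (`) (gg g) ` faces V E \<rho>"
    then obtain a where a: "a \<in> arcs V E" "X = gg g ` face_orbit \<rho> a" unfolding faces_def by blast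
    then show "X \<in> faces V E \<rho>" using gg_orbit gg_arcs unfolding faces_def by auto
  qed
  have "(`) (gg g) ` faces V E \<rho> = faces V E \<rho>"
    by (rule endo_inj_surj[OF fin_faces sub inj])
  then show ?thesis using inj unfolding bij_betw_def by blast
qed

end
end


context RS begin

lemma key_edge:
  assumes orr: "orientably_regular V E \<rho>"
    and F: "F \<in> faces V E \<rho>" "v \<in> face_vertices F"
    and F': "F' \<in> faces V E \<rho>" "v' \<in> face_vertices F'"
  shows "\<exists>g. or_aut V E \<rho> g \<and> g v = v' \<and> gg g ` F = F'"
proof -
  obtain a where a: "a \<in> F" "v = fst a" using F(2) unfolding face_vertices_def by blast
  obtain a' where a': "a' \<in> F'" "v' = fst a'" using F'(2) unfolding face_vertices_def by blast
  have aA: "a \<in> arcs V E" "F = face_orbit \<rho> a" using face_rep[OF F(1) a(1)] by auto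
  have aA': "a' \<in> arcs V E" "F' = face_orbit \<rho> a'" using face_rep[OF F'(1) a'(1)] by auto
  obtain g where g: "or_aut V E \<rho> g" "(g (fst a), g (snd a)) = a'"
    using orr aA(1) aA'(1) unfolding orientably_regular_def by blast
  have "gg g a = a'" using g(2) by (simp add: gg_def)
  then have "gg g ` F = F'" using gg_orbit[OF g(1) aA(1)] aA(2) aA'(2) by simp
  moreover have "g v = v'" using g(2) a(2) a'(2) by auto
  ultimately show ?thesis using g(1) by blast
qed

definition sig :: "('v \<Rightarrow> 'v) \<Rightarrow> 'v + ('v \<times> 'v) set \<Rightarrow> 'v + ('v \<times> 'v) set" where
  "sig g = case_sum (\<lambda>x. Inl (g x)) (\<lambda>F. Inr (gg g ` F))"

lemma sig_aut:
  assumes aut: "or_aut V E \<rho> g"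
  shows "graph_aut (vf_vertices V E \<rho>) vf_adj (sig g)"
proof -
  let ?W = "vf_vertices V E \<rho>"
  have fb: "bij_betw ((`) (gg g)) (faces V E \<rho>) (faces V E \<rho>)" by (rule gg_faces_bij[OF aut])
  have gb: "bij_betw g V V" by (rule g_bij[OF aut])
  have img: "sig g ` ?W = ?W"
  proof -
    have "sig g ` ?W = Inl ` (g ` V) \<union> Inr ` ((`) (gg g) ` faces V E \<rho>)"
      unfolding vf_vertices_def sig_def image_Un image_image by simp
    also have "\<dots> = ?W" using fb gb unfolding bij_betw_def vf_vertices_def by simp
    finally show ?thesis .
  qed
  have inj: "inj_on (sig g) ?W"
  proof (rule inj_onI)
    fix x y assume x: "x \<in> ?W" and y: "y \<in> ?W" and e: "sig g x = sig g y"
    show "x = y"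
    proof (cases x)
      case (Inl u)
      then have u: "u \<in> V" using x unfolding vf_vertices_def by auto
      show ?thesis
      proof (cases y)
        case (Inl w)
        then have w: "w \<in> V" using y unfolding vf_vertices_def by auto
        have "g u = g w" using e Inl \<open>x = Inl u\<close> by (simp add: sig_def)
        then show ?thesis using g_inj[OF aut u w] Inl \<open>x = Inl u\<close> by simp
      next
        case (Inr G) then show ?thesis using e \<open>x = Inl u\<close> by (simp add: sig_def)
      qed
    next
      case (Inr F)
      then have F: "F \<in> faces V E \<rho>" using x unfolding vf_vertices_def by auto
      show ?thesis
      proof (cases y)
        case (Inl w) then show ?thesis using e \<open>x = Inr F\<close> by (simp add: sig_def)
      next
        case (Inr G)
        then have G: "G \<in> faces V E \<rho>" using y unfolding vf_vertices_def by auto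
        have "gg g ` F = gg g ` G" using e Inr \<open>x = Inr F\<close> by (simp add: sig_def)
        then have "F = G" using fb F G unfolding bij_betw_def inj_on_def by blast
        then show ?thesis using Inr \<open>x = Inr F\<close> by simp
      qed
    qed
  qed
  have adj_aux: "u \<in> face_vertices F \<longleftrightarrow> g u \<in> face_vertices (gg g ` F)"
    if u: "u \<in> V" and F: "F \<in> faces V E \<rho>" for u F
  proof
    assume "u \<in> face_vertices F"
    then obtain b where "b \<in> F" "u = fst b" unfolding face_vertices_def by blast
    then show "g u \<in> face_vertices (gg g ` F)" unfolding face_vertices_def gg_def by force
  next
    assume "g u \<in> face_vertices (gg g ` F)"
    then obtain b where b: "b \<in> F" "g u = g (fst b)" unfolding face_vertices_def gg_def by auto
    have "b \<in> arcs V E" using faces_sub[OF F] b(1) by blast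
    then have fb: "fst b \<in> V" using arcs_iff EV by blast
    have "u = fst b" using g_inj[OF aut u fb] b(2) by blast
    then show "u \<in> face_vertices F" using b(1) unfolding face_vertices_def by blast
  qed
  have adj: "vf_adj x y \<longleftrightarrow> vf_adj (sig g x) (sig g y)" if x: "x \<in> ?W" and y: "y \<in> ?W" for x y
  proof (cases x)
    case (Inl u)
    then have u: "u \<in> V" using x unfolding vf_vertices_def by auto
    show ?thesis
    proof (cases y)
      case (Inl w) then show ?thesis using \<open>x = Inl u\<close> by (simp add: sig_def)
    next
      case (Inr G)
      then have G: "G \<in> faces V E \<rho>" using y unfolding vf_vertices_def by auto
      show ?thesis using adj_aux[OF u G] Inr \<open>x = Inl u\<close> by (simp add: sig_def)
    qed
  next
    case (Inr F)
    then have F: "F \<in> faces V E \<rho>" using x unfolding vf_vertices_def by auto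
    show ?thesis
    proof (cases y)
      case (Inl w)
      then have w: "w \<in> V" using y unfolding vf_vertices_def by auto
      show ?thesis using adj_aux[OF w F] Inl \<open>x = Inr F\<close> by (simp add: sig_def)
    next
      case (Inr G) then show ?thesis using \<open>x = Inr F\<close> by (simp add: sig_def)
    qed
  qed
  show ?thesis unfolding graph_aut_def bij_betw_def using inj img adj by blast
qed

lemma part1:
  assumes orr: "orientably_regular V E \<rho>"
  shows "edge_transitive (vf_vertices V E \<rho>) vf_adj"
  unfolding edge_transitive_def
proof (intro ballI impI)
  let ?W = "vf_vertices V E \<rho>"
  fix x y x' y' assume W: "x \<in> ?W" "y \<in> ?W" "x' \<in> ?W" "y' \<in> ?W" and adj: "vf_adj x y \<and> vf_adj x' y'"
  have norm: "\<exists>v F. {x, y} = {Inl v, Inr F} \<and> F \<in> faces V E \<rho> \<and> v \<in> face_vertices F"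
    if h1: "x \<in> ?W" and h2: "y \<in> ?W" and h3: "vf_adj x y" for x y
  proof (cases x)
    case (Inl u)
    then obtain G where "y = Inr G" using h3 by (cases y) auto
    then show ?thesis using Inl h1 h2 h3 unfolding vf_vertices_def by auto
  next
    case (Inr F)
    then obtain u where "y = Inl u" using h3 by (cases y) auto
    then show ?thesis using Inr h1 h2 h3 unfolding vf_vertices_def by (auto simp: insert_commute)
  qed
  obtain v F where 1: "{x, y} = {Inl v, Inr F}" "F \<in> faces V E \<rho>" "v \<in> face_vertices F"
    using norm W(1,2) adj by blast
  obtain v' F' where 2: "{x', y'} = {Inl v', Inr F'}" "F' \<in> faces V E \<rho>" "v' \<in> face_vertices F'"
    using norm W(3,4) adj by blast
  obtain g where g: "or_aut V E \<rho> g" "g v = v'" "gg g ` F = F'"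
    using key_edge[OF orr 1(2,3) 2(2,3)] by blast
  have "{sig g x, sig g y} = sig g ` {x, y}" by simp
  also have "\<dots> = {sig g (Inl v), sig g (Inr F)}" using 1(1) by simp
  also have "\<dots> = {x', y'}" using g 2(1) by (simp add: sig_def)
  finally show "\<exists>\<sigma>. graph_aut ?W vf_adj \<sigma> \<and> {\<sigma> x, \<sigma> y} = {x', y'}"
    using sig_aut[OF g(1)] by blast
qed


lemma P_inv:
  assumes aut: "or_aut V E \<rho> g" and x: "x \<in> arcs V E" and y: "y \<in> arcs V E"
  shows "(\<Sum>F\<in>faces V E \<rho>. arc_face_inc (gg g x) F * arc_face_inc (gg g y) F)
       = (\<Sum>F\<in>faces V E \<rho>. arc_face_inc x F * arc_face_inc y F)"
proof -
  have fb: "bij_betw ((`) (gg g)) (faces V E \<rho>) (faces V E \<rho>)" by (rule gg_faces_bij[OF aut])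
  have "(\<Sum>F\<in>faces V E \<rho>. arc_face_inc (gg g x) F * arc_face_inc (gg g y) F)
      = (\<Sum>F\<in>faces V E \<rho>. arc_face_inc (gg g x) (gg g ` F) * arc_face_inc (gg g y) (gg g ` F))"
    using sum.reindex_bij_betw[OF fb, of "\<lambda>F. arc_face_inc (gg g x) F * arc_face_inc (gg g y) F"] by simp
  also have "\<dots> = (\<Sum>F\<in>faces V E \<rho>. arc_face_inc x F * arc_face_inc y F)"
  proof (rule sum.cong)
    fix F assume F: "F \<in> faces V E \<rho>"
    have "gg g z \<in> gg g ` F \<longleftrightarrow> z \<in> F" if "z \<in> arcs V E" for z
      using inj_on_image_mem_iff[OF gg_inj[OF aut] that faces_sub[OF F]] .
    then show "arc_face_inc (gg g x) (gg g ` F) * arc_face_inc (gg g y) (gg g ` F) = arc_face_inc x F * arc_face_inc y F"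
      using x y unfolding arc_face_inc_def by simp
  qed simp
  finally show ?thesis .
qed

lemma Q_inv:
  assumes aut: "or_aut V E \<rho> g" and x: "x \<in> arcs V E" and y: "y \<in> arcs V E"
  shows "(\<Sum>v\<in>V. arc_tail_inc (gg g x) v * arc_tail_inc (gg g y) v)
       = (\<Sum>v\<in>V. arc_tail_inc x v * arc_tail_inc y v)"
proof -
  have gb: "bij_betw g V V" by (rule g_bij[OF aut])
  have fx: "fst x \<in> V" "fst y \<in> V" using x y arcs_iff EV by blast+
  have "(\<Sum>v\<in>V. arc_tail_inc (gg g x) v * arc_tail_inc (gg g y) v)
      = (\<Sum>v\<in>V. arc_tail_inc (gg g x) (g v) * arc_tail_inc (gg g y) (g v))"
    using sum.reindex_bij_betw[OF gb, of "\<lambda>v. arc_tail_inc (gg g x) v * arc_tail_inc (gg g y) v"] by simp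
  also have "\<dots> = (\<Sum>v\<in>V. arc_tail_inc x v * arc_tail_inc y v)"
  proof (rule sum.cong)
    fix v assume v: "v \<in> V"
    have "g (fst x) = g v \<longleftrightarrow> fst x = v" "g (fst y) = g v \<longleftrightarrow> fst y = v"
      using g_inj[OF aut fx(1) v] g_inj[OF aut fx(2) v] by auto
    then show "arc_tail_inc (gg g x) (g v) * arc_tail_inc (gg g y) (g v) = arc_tail_inc x v * arc_tail_inc y v"
      unfolding arc_tail_inc_def gg_def by simp
  qed simp
  finally show ?thesis .
qed

lemma mid_inv:
  assumes aut: "or_aut V E \<rho> g" and x: "x \<in> arcs V E" and y: "y \<in> arcs V E"
  shows "mid (gg g x) (gg g y) = mid x y"
  using gg_inj[OF aut] x y unfolding mid_def inj_on_def by auto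

lemma T_inv:
  assumes aut: "or_aut V E \<rho> g" and x: "x \<in> arcs V E" and y: "y \<in> arcs V E"
  shows "transition_matrix V E \<rho> k d (gg g x) (gg g y) = transition_matrix V E \<rho> k d x y"
proof -
  let ?A = "arcs V E"
  define P where "P = (\<lambda>a b. complex_of_real (2 / real k * (\<Sum>F\<in>faces V E \<rho>. arc_face_inc a F * arc_face_inc b F)) - mid a b)"
  define Q where "Q = (\<lambda>a b. complex_of_real (2 / real d * (\<Sum>v\<in>V. arc_tail_inc a v * arc_tail_inc b v)) - mid a b)"
  have T: "transition_matrix V E \<rho> k d = mmult ?A P Q" unfolding transition_matrix_def P_def Q_def ..
  have gb: "bij_betw (gg g) ?A ?A" by (rule gg_bij[OF aut])
  have mP: "mat_eq ?A (mconj (gg g) P) P"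
    unfolding mat_eq_def mconj_def P_def using P_inv[OF aut] mid_inv[OF aut] by simp
  have mQ: "mat_eq ?A (mconj (gg g) Q) Q"
    unfolding mat_eq_def mconj_def Q_def using Q_inv[OF aut] mid_inv[OF aut] by simp
  have "transition_matrix V E \<rho> k d (gg g x) (gg g y) = mmult ?A (mconj (gg g) P) (mconj (gg g) Q) x y"
    unfolding T mmult_mconj[OF gb] ..
  also have "\<dots> = mmult ?A P Q x y" by (rule mmult_cong[OF mP mQ x y])
  finally show ?thesis unfolding T .
qed

lemma part2:
  assumes orr: "orientably_regular V E \<rho>"
  shows "\<forall>H. principal_hamiltonian (arcs V E)
              (mmult (arcs V E) (transition_matrix V E \<rho> k d) (transition_matrix V E \<rho> k d)) H
            \<longrightarrow> weighted_vertex_transitive (arcs V E) H"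
proof (intro allI impI)
  let ?A = "arcs V E"
  let ?T = "transition_matrix V E \<rho> k d"
  fix H assume H: "principal_hamiltonian ?A (mmult ?A ?T ?T) H"
  show "weighted_vertex_transitive ?A H"
    unfolding weighted_vertex_transitive_def
  proof (intro ballI)
    fix a b assume a: "a \<in> ?A" and b: "b \<in> ?A"
    obtain g where g: "or_aut V E \<rho> g" "(g (fst a), g (snd a)) = b"
      using orr a b unfolding orientably_regular_def by blast
    have gab: "gg g a = b" using g(2) by (simp add: gg_def)
    have gb: "bij_betw (gg g) ?A ?A" by (rule gg_bij[OF g(1)])
    have mT: "mat_eq ?A (mconj (gg g) ?T) ?T"
      unfolding mat_eq_def mconj_def using T_inv[OF g(1)] by simp
    have inv: "\<forall>x\<in>?A. \<forall>y\<in>?A. mmult ?A ?T ?T (gg g x) (gg g y) = mmult ?A ?T ?T x y"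
    proof (intro ballI)
      fix x y assume x: "x \<in> ?A" and y: "y \<in> ?A"
      have "mmult ?A ?T ?T (gg g x) (gg g y) = mmult ?A (mconj (gg g) ?T) (mconj (gg g) ?T) x y"
        unfolding mmult_mconj[OF gb] ..
      also have "\<dots> = mmult ?A ?T ?T x y" by (rule mmult_cong[OF mT mT x y])
      finally show "mmult ?A ?T ?T (gg g x) (gg g y) = mmult ?A ?T ?T x y" .
    qed
    have "weighted_digraph_aut ?A H (gg g)"
      by (rule hamiltonian_invariant[OF H fin_arcs gb inv])
    then show "\<exists>\<sigma>. weighted_digraph_aut ?A H \<sigma> \<and> \<sigma> a = b" using gab by blast
  qed
qed

end

theorem theorem5p1:
  fixes V :: "'v set" and E :: "'v \<Rightarrow> 'v \<Rightarrow> bool" and \<rho> :: "'v \<Rightarrow> 'v \<Rightarrow> 'v"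
    and k d :: nat
  assumes "simple_graph V E" and "connected_graph V E"
    and "rotation_system V E \<rho>"
    and "circular V E \<rho>" and "has_type V E \<rho> k d"
    and "orientably_regular V E \<rho>"
  shows "edge_transitive (vf_vertices V E \<rho>) vf_adj
         \<and> (\<forall>H. principal_hamiltonian (arcs V E)
              (mmult (arcs V E) (transition_matrix V E \<rho> k d) (transition_matrix V E \<rho> k d)) H
            \<longrightarrow> weighted_vertex_transitive (arcs V E) H)"
proof -
  interpret RS V E \<rho> using assms(1,3) by unfold_locales
  show ?thesis using part1[OF assms(6)] part2[OF assms(6)] by blast
qed

end
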